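(* There is an absolute constant $c$ such that the following holds. Let $2\pi>\theta_1>\theta_2>\dots>\theta_m>0$ and $s_\ell=\sum_{j=1}^\ell\theta_j$. Then $$\max_{1\le\ell\le m}\Big|\sum_{j=1}^\ell e^{is_j}\Big|\le c\big(\theta_m^{-1}+(2\pi-\theta_1)^{-1}\big).$$ *)

theory Defs
  imports "HOL-Analysis.Analysis"
begin

end

theory Submission imports Defs begin

lemma cot_le: fixes y::real assumes "0<y" "y<pi" shows "cot y \<le> 1/y"
proof (cases "y < pi/2")
  case True
  have "y \<le> tan y" using abs_tan_ge[of y] True assms tan_gt_zero[of y] by auto
  moreover have "0 < tan y" using tan_gt_zero[of y] True assms by auto
  ultimately have "inverse (tan y) \<le> inverse y" using assms by (intro le_imp_inverse_le) auto
  thus ?thesis by (simp add: cot_altdef inverse_eq_divide)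
next
  case False
  have "cos (pi - y) \<ge> 0" using False assms by (intro cos_ge_zero) auto
  hence "cos y \<le> 0" by simp
  moreover have "sin y > 0" using assms sin_gt_zero by auto
  ultimately have "cot y \<le> 0" by (simp add: cot_def divide_nonpos_pos)
  then show ?thesis using assms by (smt (verit) divide_pos_pos)
qed

lemma cot_mono: fixes a b::real assumes "0<a" "a \<le> b" "b<pi" shows "cot b \<le> cot a"
proof -
  have sa: "sin a > 0" "sin b > 0" using assms sin_gt_zero by auto
  have "sin (b - a) \<ge> 0" using assms by (intro sin_ge_zero) auto
  hence "cos b * sin a \<le> sin b * cos a" by (simp add: sin_diff)
  hence "cos b * sin a \<le> cos a * sin b" by (simp add: mult.commute)
  thus ?thesis using sa by (simp add: cot_def divide_simps)
qed

lemma key: fixes s h :: real assumes "sin h \<noteq> 0"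
  shows "cis s = (cis s - cis (s - 2*h)) * (1/2 - \<i> * complex_of_real (cot h / 2))"
proof -
  have c2: "cos (2*h) = 1 - 2*(sin h)^2" by (simp add: cos_double_sin)
  have s2: "sin (2*h) = 2 * sin h * cos h" by (simp add: sin_double)
  have p: "(sin h)^2 + (cos h)^2 = 1" by simp
  have e: "cis (s - 2*h) = Complex (cos s * (1 - 2*(sin h)^2) + sin s * (2 * sin h * cos h)) (sin s * (1 - 2*(sin h)^2) - cos s * (2 * sin h * cos h))"
    by (simp add: cis.ctr cos_diff sin_diff c2 s2)
  show ?thesis using assms
    apply (subst e)
    apply (simp add: complex_eq_iff cot_def field_simps)
    using p by algebra
qed

lemma abel:
  fixes f w a :: "nat \<Rightarrow> complex"
  assumes "\<And>j. 1 \<le> j \<Longrightarrow> j \<le> l \<Longrightarrow> f j = (w j - w (j-1)) * a j" "1 \<le> l"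
  shows "(\<Sum>j=1..l. f j) = w l * a l - w 0 * a 1 - (\<Sum>j=1..l-1. w j * (a (Suc j) - a j))"
  using assms
proof (induction l)
  case 0 then show ?case by simp
next
  case (Suc n)
  show ?case
  proof (cases "n = 0")
    case True
    then show ?thesis using Suc.prems(1)[of 1] by (simp add: algebra_simps)
  next
    case False
    have IH: "(\<Sum>j=1..n. f j) = w n * a n - w 0 * a 1 - (\<Sum>j=1..n-1. w j * (a (Suc j) - a j))"
      using Suc.IH Suc.prems False by auto
    have n: "n = Suc (n-1)" using False by simp
    have s2: "(\<Sum>j=1..n. w j * (a (Suc j) - a j)) = (\<Sum>j=1..n-1. w j * (a (Suc j) - a j)) + w n * (a (Suc n) - a n)"
      by (subst n, subst sum.cl_ivl_Suc) (use False in auto)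
    have "(\<Sum>j=1..Suc n. f j) = (\<Sum>j=1..n. f j) + f (Suc n)" by simp
    also have "f (Suc n) = (w (Suc n) - w n) * a (Suc n)" using Suc.prems(1)[of "Suc n"] by simp
    finally have e: "(\<Sum>j=1..Suc n. f j) = (\<Sum>j=1..n. f j) + (w (Suc n) - w n) * a (Suc n)" .
    define A where "A = (\<Sum>j=1..n-1. w j * (a (Suc j) - a j))"
    define B where "B = (\<Sum>j=1..n. w j * (a (Suc j) - a j))"
    define F where "F = (\<Sum>j=1..n. f j)"
    have IH': "F = w n * a n - w 0 * a 1 - A" using IH unfolding A_def F_def .
    have s2': "B = A + w n * (a (Suc n) - a n)" using s2 unfolding A_def B_def .
    have "(\<Sum>j=1..Suc n. f j) = F + (w (Suc n) - w n) * a (Suc n)" using e unfolding F_def .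
    also have "\<dots> = w (Suc n) * a (Suc n) - w 0 * a 1 - B" unfolding IH' s2' by (simp add: algebra_simps)
    finally show ?thesis unfolding B_def by simp
  qed
qed

lemma cot_pi_minus: "cot (pi - x) = - cot (x::real)"
  by (simp add: cot_def)

theorem mainTheorem15:
  shows "\<exists>c::real. \<forall>(m::nat) (\<theta>::nat \<Rightarrow> real).
    m \<ge> 1 \<longrightarrow> \<theta> 1 < 2 * pi \<longrightarrow> \<theta> m > 0 \<longrightarrow>
    (\<forall>j k. 1 \<le> j \<longrightarrow> j < k \<longrightarrow> k \<le> m \<longrightarrow> \<theta> k < \<theta> j) \<longrightarrow>
    (MAX l\<in>{1..m}. cmod (\<Sum>j=1..l. cis (\<Sum>i=1..j. \<theta> i)))
      \<le> c * (1 / \<theta> m + 1 / (2 * pi - \<theta> 1))"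
proof (intro exI[of _ 11] allI impI)
  fix m :: nat and \<theta> :: "nat \<Rightarrow> real"
  assume m1: "m \<ge> 1" and t1: "\<theta> 1 < 2 * pi" and tm: "\<theta> m > 0"
    and dec: "\<forall>j k. 1 \<le> j \<longrightarrow> j < k \<longrightarrow> k \<le> m \<longrightarrow> \<theta> k < \<theta> j"
  define B where "B = 1 / \<theta> m + 1 / (2 * pi - \<theta> 1)"
  define S where "S j = (\<Sum>i=1..j. \<theta> i)" for j
  define t where "t j = cot (\<theta> j / 2)" for j
  define a where "a j = 1/2 - \<i> * complex_of_real (t j / 2)" for j
  define w where "w j = cis (S j)" for j
  have le1: "\<theta> j \<le> \<theta> 1" if "1 \<le> j" "j \<le> m" for j
    using dec[rule_format, of 1 j] that by (cases "j = 1") auto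
  have lem: "\<theta> m \<le> \<theta> j" if "1 \<le> j" "j \<le> m" for j
    using dec[rule_format, of j m] that by (cases "j = m") auto
  have pos: "0 < \<theta> j" "\<theta> j < 2 * pi" if "1 \<le> j" "j \<le> m" for j
    using le1[OF that] lem[OF that] tm t1 by auto
  have Q0: "0 < 2 * pi - \<theta> 1" using t1 by simp
  have tup: "t j \<le> 2 / \<theta> m" if "1 \<le> j" "j \<le> m" for j
  proof -
    have "t j \<le> 1 / (\<theta> j / 2)" unfolding t_def using pos[OF that] by (intro cot_le) auto
    also have "\<dots> = 2 / \<theta> j" by simp
    also have "\<dots> \<le> 2 / \<theta> m" using lem[OF that] tm by (intro divide_left_mono) auto
    finally show ?thesis .
  qed
  have tlo: "- t j \<le> 2 / (2 * pi - \<theta> 1)" if "1 \<le> j" "j \<le> m" for j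
  proof -
    have "- t j = cot (pi - \<theta> j / 2)" unfolding t_def cot_pi_minus by simp
    also have "\<dots> \<le> 1 / (pi - \<theta> j / 2)" using pos[OF that] by (intro cot_le) auto
    also have "\<dots> = 2 / (2 * pi - \<theta> j)" by (simp add: field_simps)
    also have "\<dots> \<le> 2 / (2 * pi - \<theta> 1)" using le1[OF that] Q0 by (intro divide_left_mono) auto
    finally show ?thesis .
  qed
  have tabs: "\<bar>t j\<bar> \<le> 2 * B" if "1 \<le> j" "j \<le> m" for j
  proof -
    have "0 < 2 / \<theta> m" "0 < 2 / (2 * pi - \<theta> 1)" using tm Q0 by auto
    moreover have "2 * B = 2 / \<theta> m + 2 / (2 * pi - \<theta> 1)" unfolding B_def by simp
    ultimately show ?thesis using tup[OF that] tlo[OF that] by linarith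
  qed
  have tmono: "t j \<le> t (Suc j)" if "1 \<le> j" "Suc j \<le> m" for j
    unfolding t_def using pos[of j] pos[of "Suc j"] dec[rule_format, of j "Suc j"] that
    by (intro cot_mono) auto
  have normw: "norm (w j) = 1" for j unfolding w_def by simp
  have norma: "norm (a j) \<le> 1/2 + \<bar>t j\<bar> / 2" for j
  proof -
    have "norm (a j) \<le> norm (1/2 :: complex) + norm (\<i> * complex_of_real (t j / 2))"
      unfolding a_def by (rule norm_triangle_ineq4)
    also have "\<dots> = 1/2 + \<bar>t j\<bar> / 2" by (simp add: norm_mult)
    finally show ?thesis .
  qed
  have normd: "norm (a (Suc j) - a j) = (t (Suc j) - t j) / 2" if "1 \<le> j" "Suc j \<le> m" for j
  proof -
    have "a (Suc j) - a j = - \<i> * complex_of_real ((t (Suc j) - t j) / 2)"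
      unfolding a_def by (simp add: algebra_simps diff_divide_distrib)
    hence "norm (a (Suc j) - a j) = \<bar>(t (Suc j) - t j) / 2\<bar>" by (simp add: norm_mult norm_divide flip: of_real_diff)
    thus ?thesis using tmono[OF that] by simp
  qed
  have bound: "cmod (\<Sum>j=1..l. cis (\<Sum>i=1..j. \<theta> i)) \<le> 11 * B" if l: "1 \<le> l" "l \<le> m" for l
  proof -
    have rep: "cis (S j) = (w j - w (j-1)) * a j" if "1 \<le> j" "j \<le> l" for j
    proof -
      have Sj: "S (j - 1) = S j - 2 * (\<theta> j / 2)"
        unfolding S_def using that sum.cl_ivl_Suc[of \<theta> 1 "j-1"] by (cases j) auto
      have "sin (\<theta> j / 2) \<noteq> 0" using pos[of j] that l
        by (intro order.strict_implies_not_eq[symmetric] sin_gt_zero) auto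
      from key[OF this, of "S j"] show ?thesis unfolding w_def a_def t_def Sj by simp
    qed
    have eq: "(\<Sum>j=1..l. cis (\<Sum>i=1..j. \<theta> i)) = w l * a l - w 0 * a 1 - (\<Sum>j=1..l-1. w j * (a (Suc j) - a j))"
      using abel[of l "\<lambda>j. cis (S j)" w a, OF rep l(1)] unfolding S_def by simp
    have "cmod (\<Sum>j=1..l. cis (\<Sum>i=1..j. \<theta> i)) \<le> norm (w l * a l) + norm (w 0 * a 1) + norm (\<Sum>j=1..l-1. w j * (a (Suc j) - a j))"
      unfolding eq using norm_triangle_ineq4[of "w l * a l - w 0 * a 1" "\<Sum>j=1..l-1. w j * (a (Suc j) - a j)"] norm_triangle_ineq4[of "w l * a l" "w 0 * a 1"] by linarith
    also have "\<dots> \<le> norm (a l) + norm (a 1) + (\<Sum>j=1..l-1. norm (a (Suc j) - a j))"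
      using norm_sum[of "\<lambda>j. w j * (a (Suc j) - a j)" "{1..l-1}"] by (simp add: norm_mult normw)
    also have "(\<Sum>j=1..l-1. norm (a (Suc j) - a j)) = (\<Sum>j=1..l-1. (t (Suc j) - t j) / 2)"
      using l by (intro sum.cong) (auto simp: normd)
    also have "\<dots> = (t l - t 1) / 2"
      using l by (simp add: sum_divide_distrib[symmetric] sum_Suc_diff)
    also have "norm (a l) + norm (a 1) + (t l - t 1) / 2 \<le> 1 + \<bar>t l\<bar>/2 + \<bar>t 1\<bar>/2 + (t l - t 1)/2"
      using norma[of l] norma[of 1] by simp
    also have "\<dots> \<le> 11 * B"
    proof -
      have "1 \<le> 2 * pi / \<theta> m" using pos[of m] m1 by (simp add: field_simps)
      also have "\<dots> \<le> 8 / \<theta> m" using pi_less_4 tm by (intro divide_right_mono) auto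
      finally have one: "1 \<le> 8 / \<theta> m" .
      have "(t l - t 1) / 2 \<le> B" using tup[OF l] tlo[of 1] m1 unfolding B_def by simp
      moreover have "1 / \<theta> m \<le> B" using Q0 unfolding B_def by simp
      moreover have "8 / \<theta> m = 8 * (1 / \<theta> m)" by simp
      ultimately show ?thesis using tabs[OF l] tabs[of 1] m1 one by linarith
    qed
    finally show ?thesis .
  qed
  have "(MAX l\<in>{1..m}. cmod (\<Sum>j=1..l. cis (\<Sum>i=1..j. \<theta> i))) \<le> 11 * B"
    using m1 bound by (subst Max_le_iff) auto
  thus "(MAX l\<in>{1..m}. cmod (\<Sum>j=1..l. cis (\<Sum>i=1..j. \<theta> i))) \<le> 11 * (1 / \<theta> m + 1 / (2 * pi - \<theta> 1))"
    unfolding B_def .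
qed

end
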